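(* Let $\rho:SL(n,\mathbb R)\to SL(W)$ be a smooth homomorphism, $W$ a finite-dimensional real vector space with a Euclidean norm $|\cdot|_W$ invariant under $\rho(SO(n))$ and such that $d\rho(\xi^{T})=(d\rho(\xi))^{T}$ for all $\xi\in\mathfrak{sl}(n,\mathbb R)$. Fix $w\in W$ and let $G_w=\{g\in SL(n,\mathbb R):\rho(g)w=w\}$. Define $F:\mathcal H\to\mathbb R$ by $F(g^{T}g)=|\rho(g)w|_W^2$ for $g\in SL(n,\mathbb R)$ (well defined). If $F$ has a critical point at $H\in\mathcal H$, then the Lie algebra $\mathfrak g_w$ of $G_w$ is symmetric with respect to the inner product $\langle u,v\rangle_H=u^{T}Hv$, i.e. $H^{-1}A^{T}H\in\mathfrak g_w$ for every $A\in\mathfrak g_w$.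
   Context: $\mathcal H$ denotes the set of positive definite symmetric real $n\times n$ matrices of determinant $1$ (a smooth manifold identified with $SO(n)\backslash SL(n,\mathbb R)$ via $g\mapsto g^{T}g$); transposes on $\mathrm{End}(W)$ are with respect to $|\cdot|_W$. *)

theory Defs
  imports "HOL-Analysis.Analysis"
begin

definition SLn :: "(real^'n^'n) set" where
  "SLn = {g. det g = 1}"

definition SOn :: "(real^'n^'n) set" where
  "SOn = {k. orthogonal_matrix k \<and> det k = 1}"

definition sln :: "(real^'n^'n) set" where
  "sln = {\<xi>. trace \<xi> = 0}"

definition Hspace :: "(real^'n^'n) set" where
  "Hspace = {H. transpose H = H \<and> (\<forall>x. x \<noteq> 0 \<longrightarrow> x \<bullet> (H *v x) > 0) \<and> det H = 1}"

definition mpow :: "real^'n^'n \<Rightarrow> nat \<Rightarrow> real^'n^'n" where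
  "mpow A k = (((**) A) ^^ k) (mat 1)"

definition mexp :: "real^'n^'n \<Rightarrow> real^'n^'n" where
  "mexp A = (\<Sum>k. (1 / real (fact k)) *\<^sub>R mpow A k)"

fun iter_dd :: "('a::real_normed_vector) list \<Rightarrow> ('a \<Rightarrow> 'b::real_normed_vector) \<Rightarrow> 'a \<Rightarrow> 'b" where
  "iter_dd [] f = f"
| "iter_dd (v # vs) f = (\<lambda>x. frechet_derivative (iter_dd vs f) (at x) v)"

definition smooth_on :: "('a::real_normed_vector) set \<Rightarrow> ('a \<Rightarrow> 'b::real_normed_vector) \<Rightarrow> bool" where
  "smooth_on U f \<longleftrightarrow> open U \<and> (\<forall>vs. \<forall>x\<in>U. iter_dd vs f differentiable (at x))"

text \<open>Smoothness of a map defined on a subset S (an embedded submanifold) of a Euclidean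
  space: locally it is the restriction of a smooth map on an open set.\<close>
definition smooth_on_subset :: "('a::real_normed_vector) set \<Rightarrow> ('a \<Rightarrow> 'b::real_normed_vector) \<Rightarrow> bool" where
  "smooth_on_subset S f \<longleftrightarrow>
     (\<forall>x\<in>S. \<exists>U f'. x \<in> U \<and> smooth_on U f' \<and> (\<forall>y\<in>U \<inter> S. f' y = f y))"

definition drho :: "(real^'n^'n \<Rightarrow> real^'m^'m) \<Rightarrow> real^'n^'n \<Rightarrow> real^'m^'m" where
  "drho \<rho> \<xi> = vector_derivative (\<lambda>t. \<rho> (mexp (t *\<^sub>R \<xi>))) (at 0)"

definition stab :: "(real^'n^'n \<Rightarrow> real^'m^'m) \<Rightarrow> real^'m \<Rightarrow> (real^'n^'n) set" where
  "stab \<rho> w = {g\<in>SLn. \<rho> g *v w = w}"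

definition lie_alg :: "(real^'n^'n) set \<Rightarrow> (real^'n^'n) set" where
  "lie_alg G = {A. \<forall>t::real. mexp (t *\<^sub>R A) \<in> G}"

definition Ffun :: "(real^'n^'n \<Rightarrow> real^'m^'m) \<Rightarrow> real^'m \<Rightarrow> real^'n^'n \<Rightarrow> real" where
  "Ffun \<rho> w X = (norm (\<rho> (SOME g. g \<in> SLn \<and> transpose g ** g = X) *v w))\<^sup>2"

definition critical_point_H :: "(real^'n^'n \<Rightarrow> real) \<Rightarrow> real^'n^'n \<Rightarrow> bool" where
  "critical_point_H F H \<longleftrightarrow> H \<in> Hspace \<and>
     (\<forall>\<gamma>::real \<Rightarrow> real^'n^'n. (\<forall>t. \<gamma> t \<in> Hspace) \<and> \<gamma> 0 = H \<and> \<gamma> differentiable (at 0)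
        \<longrightarrow> ((\<lambda>t. F (\<gamma> t)) has_real_derivative 0) (at 0))"

end

theory Submission
  imports Defs
begin


typedef ('n::finite) sqm = "UNIV :: (real^'n^'n) set" morphisms M Mk by auto

lemma M_inject': "M x = M y \<Longrightarrow> x = y" by (simp add: M_inject)
lemma Mk_inv[simp]: "M (Mk A) = A" by (simp add: Mk_inverse)

definition onm :: "real^'n^'n \<Rightarrow> real" where "onm A = onorm ((*v) A)"

lemma onm_bl: "bounded_linear ((*v) (A::real^'n^'n))"
  by (simp add: matrix_vector_mul_bounded_linear)

lemma onm_triangle: "onm (A + B) \<le> onm A + onm B"
  unfolding onm_def using onorm_triangle[OF onm_bl[of A] onm_bl[of B]]
  by (simp add: matrix_vector_mult_add_rdistrib[symmetric] fun_eq_iff)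

lemma onm_scale: "onm (c *\<^sub>R A) = \<bar>c\<bar> * onm A"
  unfolding onm_def using onorm_scaleR[OF onm_bl[of A], of c]
  by (simp add: scaleR_matrix_vector_assoc)

lemma onm_eq0: "onm A = 0 \<longleftrightarrow> A = 0"
  unfolding onm_def using onorm_eq_0[OF onm_bl[of A]]
  by (metis matrix_vector_mul_lid matrix_vector_mult_0 matrix_eq matrix_vector_mult_0_right)

lemma onm_mult: "onm (A ** B) \<le> onm A * onm B"
  unfolding onm_def using onorm_compose[OF onm_bl[of A] onm_bl[of B]]
  by (simp add: o_def matrix_vector_mul_assoc)

lemma onm_one: "onm (mat 1 :: real^'n^'n) = 1"
proof -
  have "(*v) (mat 1::real^'n^'n) = (\<lambda>x. x)" by (rule ext) simp
  then show ?thesis unfolding onm_def using onorm_id[where 'a="real^'n"] by simp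
qed

lemma onm_ge0: "0 \<le> onm A" unfolding onm_def by (rule onorm_pos_le[OF onm_bl])

lemma onm_le_fro: "onm (A::real^'n^'n) \<le> real CARD('n) * real CARD('n) * norm A"
  unfolding onm_def
  by (rule onorm_le_matrix_component) (rule order_trans[OF component_le_norm_cart Finite_Cartesian_Product.norm_nth_le])

lemma fro_le_onm: "norm (A::real^'n^'n) \<le> real CARD('n) * real CARD('n) * onm A"
proof -
  have "norm A \<le> (\<Sum>i\<in>UNIV. norm (A$i))" by (simp add: norm_vec_def L2_set_le_sum)
  also have "\<dots> \<le> (\<Sum>i\<in>(UNIV::'n set). real CARD('n) * onm A)"
  proof (rule sum_mono)
    fix i
    have "norm (A$i) \<le> (\<Sum>j\<in>UNIV. \<bar>A$i$j\<bar>)" by (rule norm_le_l1_cart)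
    also have "\<dots> \<le> (\<Sum>j\<in>(UNIV::'n set). onm A)"
      by (rule sum_mono) (simp add: onm_def matrix_component_le_onorm)
    finally show "norm (A$i) \<le> real CARD('n) * onm A" by simp
  qed
  finally show ?thesis by simp
qed

lemma matrix_add_rdistrib: "(A + B) ** (C::real^'n^'n) = A ** C + B ** C"
  by (simp add: matrix_matrix_mult_def vec_eq_iff sum.distrib distrib_right)

instantiation sqm :: (finite) real_algebra_1
begin
definition zero_sqm :: "'a sqm" where "zero_sqm = Mk 0"
definition one_sqm :: "'a sqm" where "one_sqm = Mk (mat 1)"
definition plus_sqm :: "'a sqm \<Rightarrow> 'a sqm \<Rightarrow> 'a sqm" where "plus_sqm x y = Mk (M x + M y)"
definition minus_sqm :: "'a sqm \<Rightarrow> 'a sqm \<Rightarrow> 'a sqm" where "minus_sqm x y = Mk (M x - M y)"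
definition uminus_sqm :: "'a sqm \<Rightarrow> 'a sqm" where "uminus_sqm x = Mk (- M x)"
definition times_sqm :: "'a sqm \<Rightarrow> 'a sqm \<Rightarrow> 'a sqm" where "times_sqm x y = Mk (M x ** M y)"
definition scaleR_sqm :: "real \<Rightarrow> 'a sqm \<Rightarrow> 'a sqm" where "scaleR_sqm c x = Mk (c *\<^sub>R M x)"
instance
proof
  fix x y z :: "'a sqm" and a b :: real
  show "x + y + z = x + (y + z)" by (simp add: plus_sqm_def add.assoc)
  show "x + y = y + x" by (simp add: plus_sqm_def add.commute)
  show "0 + x = x" by (simp add: plus_sqm_def zero_sqm_def M_inverse)
  show "- x + x = 0" by (simp add: plus_sqm_def zero_sqm_def uminus_sqm_def)
  show "x - y = x + - y" by (simp add: plus_sqm_def minus_sqm_def uminus_sqm_def)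
  show "a *\<^sub>R (x + y) = a *\<^sub>R x + a *\<^sub>R y" by (simp add: plus_sqm_def scaleR_sqm_def scaleR_add_right)
  show "(a + b) *\<^sub>R x = a *\<^sub>R x + b *\<^sub>R x" by (simp add: plus_sqm_def scaleR_sqm_def scaleR_add_left)
  show "a *\<^sub>R b *\<^sub>R x = (a * b) *\<^sub>R x" by (simp add: scaleR_sqm_def)
  show "1 *\<^sub>R x = x" by (simp add: scaleR_sqm_def M_inverse)
  show "a *\<^sub>R x * y = a *\<^sub>R (x * y)" by (simp add: scaleR_sqm_def times_sqm_def scalar_matrix_assoc[symmetric])
  show "x * a *\<^sub>R y = a *\<^sub>R (x * y)" by (simp add: scaleR_sqm_def times_sqm_def matrix_scalar_ac scalar_matrix_assoc[symmetric])
  show "x * y * z = x * (y * z)" by (simp add: times_sqm_def matrix_mul_assoc[symmetric])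
  show "(x + y) * z = x * z + y * z" by (simp add: times_sqm_def plus_sqm_def matrix_add_rdistrib)
  show "x * (y + z) = x * y + x * z" by (simp add: times_sqm_def plus_sqm_def matrix_add_ldistrib)
  show "1 * x = x" by (simp add: times_sqm_def one_sqm_def M_inverse)
  show "x * 1 = x" by (simp add: times_sqm_def one_sqm_def M_inverse)
  show "(0::'a sqm) \<noteq> 1" unfolding zero_sqm_def one_sqm_def
    by (metis Mk_inv onm_eq0 onm_one zero_neq_one)
qed
end

instantiation sqm :: (finite) real_normed_algebra_1
begin
definition norm_sqm :: "'a sqm \<Rightarrow> real" where "norm_sqm x = onm (M x)"
definition "sgn_sqm (x::'a sqm) = Mk (inverse (onm (M x)) *\<^sub>R M x)"
definition "dist_sqm (x::'a sqm) y = onm (M x - M y)"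
definition "uniformity_sqm = (INF e\<in>{0 <..}. principal {(x::'a sqm, y). dist x y < e})"
definition "open_sqm (U::'a sqm set) = (\<forall>x\<in>U. eventually (\<lambda>(x', y). x' = x \<longrightarrow> y \<in> U) uniformity)"
instance
proof
  fix x y z :: "'a sqm" and a b :: real
  show "sgn x = x /\<^sub>R norm x" by (simp add: sgn_sqm_def scaleR_sqm_def norm_sqm_def)
  show "dist x y = norm (x - y)" by (simp add: dist_sqm_def norm_sqm_def minus_sqm_def)
  show "(uniformity :: ('a sqm * 'a sqm) filter) = (INF e\<in>{0 <..}. principal {(x, y). dist x y < e})"
    by (simp add: uniformity_sqm_def)
  show "open U = (\<forall>x\<in>U. \<forall>\<^sub>F (x', y) in uniformity. x' = x \<longrightarrow> y \<in> U)" for U :: "'a sqm set"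
    by (simp add: open_sqm_def)
  show "(norm x = 0) = (x = 0)" unfolding norm_sqm_def zero_sqm_def onm_eq0 by (metis M_inverse Mk_inv)
  show "norm (x + y) \<le> norm x + norm y" by (simp add: norm_sqm_def plus_sqm_def onm_triangle)
  show "norm (a *\<^sub>R x) = \<bar>a\<bar> * norm x" by (simp add: norm_sqm_def scaleR_sqm_def onm_scale)
  show "norm (x * y) \<le> norm x * norm y" by (simp add: norm_sqm_def times_sqm_def onm_mult)
  show "norm (1::'a sqm) = 1" by (simp add: norm_sqm_def one_sqm_def onm_one)
qed
end


lemma M_add[simp]: "M (x + y) = M x + M y" by (simp add: plus_sqm_def)
lemma M_diff[simp]: "M (x - y) = M x - M y" by (simp add: minus_sqm_def)
lemma M_neg[simp]: "M (- x) = - M x" by (simp add: uminus_sqm_def)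
lemma M_zero[simp]: "M 0 = 0" by (simp add: zero_sqm_def)
lemma M_one[simp]: "M 1 = mat 1" by (simp add: one_sqm_def)
lemma M_mult[simp]: "M (x * y) = M x ** M y" by (simp add: times_sqm_def)
lemma M_scaleR[simp]: "M (c *\<^sub>R x) = c *\<^sub>R M x" by (simp add: scaleR_sqm_def)
lemma norm_sqm_M: "norm x = onm (M x)" by (simp add: norm_sqm_def)

lemma M_bl: "bounded_linear (M :: 'n::finite sqm \<Rightarrow> real^'n^'n)"
proof
  show "\<exists>K. \<forall>x::'n sqm. norm (M x) \<le> norm x * K"
    by (rule exI[of _ "real CARD('n) * real CARD('n)"]) (metis norm_sqm_M fro_le_onm mult.commute)
qed simp_all

lemma Mk_bl: "bounded_linear (Mk :: real^'n^'n \<Rightarrow> 'n::finite sqm)"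
proof
  show "\<exists>K. \<forall>x::real^'n^'n. norm (Mk x) \<le> norm x * K"
    by (rule exI[of _ "real CARD('n) * real CARD('n)"]) (metis Mk_inv norm_sqm_M onm_le_fro mult.commute)
qed (simp_all add: plus_sqm_def scaleR_sqm_def)

instance sqm :: (finite) banach
proof
  fix X :: "nat \<Rightarrow> 'a sqm" assume "Cauchy X"
  then have "Cauchy (\<lambda>n. M (X n))" by (rule bounded_linear.Cauchy[OF M_bl])
  then obtain L where "(\<lambda>n. M (X n)) \<longlonglongrightarrow> L" using Cauchy_convergent convergent_def by blast
  then have "(\<lambda>n. Mk (M (X n))) \<longlonglongrightarrow> Mk L" by (rule bounded_linear.tendsto[OF Mk_bl])
  then show "convergent X" by (auto simp: M_inverse convergent_def)
qed

lemma M_power: "M (x ^ k) = mpow (M x) k"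
  by (induct k) (simp_all add: mpow_def)

lemma mexp_eq: "mexp A = M (exp (Mk A))"
proof -
  have "(\<lambda>k. (1 / real (fact k)) *\<^sub>R mpow A k) = (\<lambda>k. M ((Mk A)^k /\<^sub>R fact k))"
    by (simp add: M_power divide_inverse_commute)
  moreover have "(\<lambda>k. M ((Mk A)^k /\<^sub>R fact k)) sums M (exp (Mk A))"
    by (rule bounded_linear.sums[OF M_bl]) (simp add: exp_def summable_exp_generic summable_sums)
  ultimately show ?thesis unfolding mexp_def by (metis sums_unique)
qed


lemma Mk_add: "Mk (A + B) = Mk A + Mk B" by (metis M_add Mk_inv M_inverse)
lemma Mk_mult: "Mk (A ** B) = Mk A * Mk B" by (metis M_mult Mk_inv M_inverse)
lemma Mk_scaleR: "Mk (c *\<^sub>R A) = c *\<^sub>R Mk A" by (metis M_scaleR Mk_inv M_inverse)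
lemma Mk_zero: "Mk 0 = 0" by (metis M_zero M_inverse)
lemma Mk_one: "Mk (mat 1) = 1" by (metis M_one M_inverse)

lemma mexp_add_comm: "A ** B = B ** A \<Longrightarrow> mexp (A + B) = mexp A ** mexp B"
  unfolding mexp_eq Mk_add
  by (metis M_mult Mk_mult exp_add_commuting)

lemma mexp_zero[simp]: "mexp 0 = mat 1"
  by (simp add: mexp_eq Mk_zero)

lemma mexp_scale_add: "mexp ((s + t) *\<^sub>R X) = mexp (s *\<^sub>R X) ** mexp (t *\<^sub>R X)"
  by (simp add: scaleR_add_left mexp_add_comm matrix_scalar_ac scalar_matrix_assoc[symmetric])

lemma mexp_neg_left: "mexp (- X) ** mexp X = mat 1"
proof -
  have "(-X) ** X = X ** (-X)" by (simp add: matrix_matrix_mult_def vec_eq_iff sum_negf)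
  then have "mexp (-X + X) = mexp (- X) ** mexp X" by (rule mexp_add_comm)
  then show ?thesis by simp
qed

lemma mexp_neg_right: "mexp X ** mexp (- X) = mat 1"
  using mexp_neg_left[of "-X"] by simp

lemma mexp_deriv: "((\<lambda>t. mexp (t *\<^sub>R X)) has_vector_derivative mexp (t *\<^sub>R X) ** X) (at t)"
proof -
  have "((\<lambda>t. M (exp (t *\<^sub>R Mk X))) has_vector_derivative M (exp (t *\<^sub>R Mk X) * Mk X)) (at t)"
    by (rule bounded_linear.has_vector_derivative[OF M_bl exp_scaleR_has_vector_derivative_right])
  then show ?thesis by (simp add: mexp_eq Mk_scaleR)
qed


lemma mexp_sums: "(\<lambda>k. (1 / real (fact k)) *\<^sub>R mpow A k) sums mexp A"
proof -
  have "(\<lambda>k. (1 / real (fact k)) *\<^sub>R mpow A k) = (\<lambda>k. M ((Mk A)^k /\<^sub>R fact k))"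
    by (simp add: M_power divide_inverse_commute)
  moreover have "(\<lambda>k. M ((Mk A)^k /\<^sub>R fact k)) sums M (exp (Mk A))"
    by (rule bounded_linear.sums[OF M_bl]) (simp add: exp_def summable_exp_generic summable_sums)
  ultimately show ?thesis by (simp add: mexp_eq)
qed

lemma mpow_commute: "mpow A k ** A = A ** mpow A k"
proof -
  have "M (Mk A ^ k * Mk A) = M (Mk A * Mk A ^ k)" by (simp add: power_commutes)
  then show ?thesis by (simp add: M_power)
qed

lemma mpow_Suc: "mpow A (Suc k) = A ** mpow A k" by (simp add: mpow_def)
lemma mpow_0: "mpow A 0 = mat 1" by (simp add: mpow_def)

lemma mpow_transpose: "mpow (transpose A) k = transpose (mpow A k)"
proof (induct k)
  case (Suc k)
  then show ?case by (simp add: mpow_Suc) (metis matrix_transpose_mul mpow_commute)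
qed (simp add: mpow_0)

lemma linear_transpose: "linear (transpose :: real^'n^'m \<Rightarrow> real^'m^'n)"
  by (rule linearI) (simp_all add: transpose_def vec_eq_iff)

lemma bl_transpose: "bounded_linear (transpose :: real^'n^'m \<Rightarrow> real^'m^'n)"
  using linear_transpose linear_conv_bounded_linear by blast

lemma mexp_transpose: "mexp (transpose X) = transpose (mexp X)"
proof -
  have "(\<lambda>k. transpose ((1 / real (fact k)) *\<^sub>R mpow X k)) sums transpose (mexp X)"
    by (rule bounded_linear.sums[OF bl_transpose mexp_sums])
  then have "(\<lambda>k. (1 / real (fact k)) *\<^sub>R mpow (transpose X) k) sums transpose (mexp X)"
    by (simp add: mpow_transpose transpose_scalar)
  then show ?thesis using mexp_sums sums_unique2 by blast
qed

lemma mexp_conj: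
  fixes P Q X :: "real^'n::finite^'n"
  assumes "P ** Q = mat 1" "Q ** P = mat 1"
  shows "mexp (P ** X ** Q) = P ** mexp X ** Q"
proof -
  define p q x where "p = Mk P" "q = Mk Q" "x = Mk X"
  have pq: "p * q = 1" "q * p = 1" using assms by (simp_all add: p_q_x_def Mk_mult[symmetric] Mk_one)
  have pw: "(p * x * q) ^ k = p * x ^ k * q" for k
  proof (induct k)
    case 0 then show ?case using pq by simp
  next
    case (Suc k)
    have "(p * x * q) ^ Suc k = (p * x * q) * (p * x ^ k * q)" by (simp only: power_Suc Suc)
    also have "\<dots> = p * x * (q * p) * x ^ k * q" by (simp add: mult.assoc)
    finally show ?case using pq by (simp add: mult.assoc)
  qed
  have "(\<lambda>k. p * (x ^ k /\<^sub>R fact k) * q) sums (p * exp x * q)"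
    by (rule bounded_linear.sums[OF bounded_linear_mult_left bounded_linear.sums[OF bounded_linear_mult_right exp_converges]])
  then have "(\<lambda>k. (p * x * q) ^ k /\<^sub>R fact k) sums (p * exp x * q)" by (simp add: pw)
  then have "exp (p * x * q) = p * exp x * q" using exp_converges sums_unique2 by blast
  then show ?thesis by (simp add: mexp_eq p_q_x_def Mk_mult)
qed


lemma perm_nonid_other:
  assumes "p permutes (UNIV::'n set)" "p \<noteq> id"
  shows "\<exists>j. j \<noteq> i \<and> p j \<noteq> j"
proof -
  obtain j0 where j0: "p j0 \<noteq> j0" using assms(2) by (metis eq_id_iff)
  show ?thesis
  proof (cases "j0 = i")
    case False then show ?thesis using j0 by blast
  next
    case True
    have "p (p i) \<noteq> p i"
      using j0 True permutes_inj[OF assms(1)] by (metis injD)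
    then show ?thesis using j0 True by metis
  qed
qed

lemma det_deriv0:
  fixes E :: "real \<Rightarrow> real^'n::finite^'n"
  assumes d: "(E has_vector_derivative A) (at 0)" and e0: "E 0 = mat 1"
  shows "((\<lambda>t. det (E t)) has_real_derivative trace A) (at 0)"
proof -
  have ent: "((\<lambda>t. E t $ i $ j) has_real_derivative A $ i $ j) (at 0)" for i j
  proof -
    have "((\<lambda>t. E t $ i) has_vector_derivative A $ i) (at 0)"
      by (rule bounded_linear.has_vector_derivative[OF bounded_linear_vec_nth d])
    then have "((\<lambda>t. E t $ i $ j) has_vector_derivative A $ i $ j) (at 0)"
      by (rule bounded_linear.has_vector_derivative[OF bounded_linear_vec_nth])
    then show ?thesis by (simp add: has_real_derivative_iff_has_vector_derivative)
  qed
  let ?P = "{p. p permutes (UNIV::'n set)}"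
  let ?D = "\<lambda>p. of_int (sign p) * (\<Sum>i\<in>UNIV. A $ i $ p i * (\<Prod>j\<in>UNIV - {i}. E 0 $ j $ p j))"
  have "((\<lambda>t. det (E t)) has_real_derivative sum ?D ?P) (at 0)"
    unfolding det_def
    by (intro DERIV_sum DERIV_cmult has_field_derivative_prod ent)
  moreover have "sum ?D ?P = trace A"
  proof -
    have z: "?D p = 0" if hp: "p \<in> ?P - {id}" for p
    proof -
      have pz: "(\<Prod>j\<in>UNIV - {i}. E 0 $ j $ p j) = 0" for i
      proof -
        obtain j where "j \<noteq> i" "p j \<noteq> j" using perm_nonid_other[of p i] hp by blast
        then show ?thesis using e0 by (intro prod_zero) (auto simp: mat_def intro!: bexI[of _ j])
      qed
      show ?thesis by (simp only: pz mult_zero_right sum.neutral_const)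
    qed
    have "sum ?D ?P = ?D id + sum ?D (?P - {id})"
      by (rule sum.remove) (simp_all add: permutes_id)
    also have "sum ?D (?P - {id}) = 0" using z by (rule sum.neutral[OF ballI])
    also have "?D id = trace A"
    proof -
      have "(\<Prod>j\<in>UNIV - {i}. E 0 $ j $ id j) = 1" for i using e0 by (simp add: mat_def)
      then show ?thesis by (simp add: sign_id trace_def)
    qed
    finally show ?thesis by simp
  qed
  ultimately show ?thesis by simp
qed

lemma trace_zero_of_det:
  fixes A :: "real^'n::finite^'n"
  assumes "\<And>t. det (mexp (t *\<^sub>R A)) = 1"
  shows "trace A = 0"
proof -
  have "((\<lambda>t. mexp (t *\<^sub>R A)) has_vector_derivative A) (at 0)"
    using mexp_deriv[of A 0] by simp
  then have "((\<lambda>t. det (mexp (t *\<^sub>R A))) has_real_derivative trace A) (at 0)"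
    by (rule det_deriv0) simp
  then have "((\<lambda>t. 1::real) has_real_derivative trace A) (at 0)" using assms by simp
  then show ?thesis using DERIV_const DERIV_unique by blast
qed



definition hon :: "real^'n^'n \<Rightarrow> (real^'n) set \<Rightarrow> bool" where
  "hon H S \<longleftrightarrow> (\<forall>x\<in>S. \<forall>y\<in>S. x \<bullet> (H *v y) = (if x = y then 1 else 0))"

lemma hon_indep:
  assumes "hon H S"
  shows "independent S"
proof
  assume "dependent S"
  then obtain a where a: "a \<in> S" "a \<in> span (S - {a})" unfolding dependent_def by blast
  have "a \<bullet> (H *v y) = 0" if "y \<in> span (S - {a})" for y
    using that
  proof (induct rule: span_induct)
    case base then show ?case
      by (auto simp: subspace_def matrix_vector_right_distrib inner_add_right
          matrix_vector_mult_scaleR inner_scaleR_right)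
  next
    case (step x) then show ?case using assms a(1) unfolding hon_def by auto
  qed
  then have "a \<bullet> (H *v a) = 0" using a by blast
  moreover have "a \<bullet> (H *v a) = 1" using assms a(1) unfolding hon_def by auto
  ultimately show False by simp
qed

lemma hon_card: "hon H (S::(real^'n) set) \<Longrightarrow> finite S \<and> card S \<le> CARD('n)"
  using independent_bound[OF hon_indep] by simp


lemma sym_form:
  fixes H :: "real^'n^'n"
  assumes "transpose H = H"
  shows "x \<bullet> (H *v y) = y \<bullet> (H *v x)"
proof -
  have "x \<bullet> (H *v y) = (x v* H) \<bullet> y" by (rule dot_lmul_matrix[symmetric])
  also have "x v* H = H *v x" using assms by (metis transpose_matrix_vector)
  finally show ?thesis by (simp add: inner_commute)
qed

lemma hon_extend:
  fixes H :: "real^'n^'n"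
  assumes sym: "transpose H = H" and pd: "\<And>x. x \<noteq> 0 \<Longrightarrow> x \<bullet> (H *v x) > 0"
    and S: "hon H S" and lt: "card S < CARD('n)"
  shows "\<exists>S'. hon H S' \<and> card S' = Suc (card S)"
proof -
  have fin: "finite S" using hon_card[OF S] by simp
  have ind: "independent S" by (rule hon_indep[OF S])
  have "span S \<noteq> UNIV"
  proof
    assume "span S = UNIV"
    then have "dim (span S) = CARD('n)" by simp
    then have "card S = CARD('n)" using dim_eq_card_independent[OF ind] dim_span by simp
    then show False using lt by simp
  qed
  then obtain v where v: "v \<notin> span S" by blast
  define u where "u = v - (\<Sum>s\<in>S. (s \<bullet> (H *v v)) *\<^sub>R s)"
  have "(\<Sum>s\<in>S. (s \<bullet> (H *v v)) *\<^sub>R s) \<in> span S"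
    by (intro span_sum span_mul span_base)
  then have u0: "u \<noteq> 0" using v unfolding u_def by (metis eq_iff_diff_eq_0)
  have lin: "x \<bullet> (H *v (\<Sum>s\<in>S. c s *\<^sub>R s)) = (\<Sum>s\<in>S. c s * (x \<bullet> (H *v s)))" for x c
    by (simp add: matrix_vector_mult_linear_continuous_at inner_sum_right
        matrix_vector_mult_scaleR inner_scaleR_right linear_sum[OF matrix_vector_mul_linear])
  have orth: "s' \<bullet> (H *v u) = 0" if "s' \<in> S" for s'
  proof -
    have "s' \<bullet> (H *v (\<Sum>s\<in>S. (s \<bullet> (H *v v)) *\<^sub>R s)) = (\<Sum>s\<in>S. (s \<bullet> (H *v v)) * (s' \<bullet> (H *v s)))"
      by (rule lin)
    also have "\<dots> = (\<Sum>s\<in>S. if s = s' then s \<bullet> (H *v v) else 0)"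
      using S that unfolding hon_def by (intro sum.cong) auto
    also have "\<dots> = s' \<bullet> (H *v v)" using fin that by simp
    finally show ?thesis unfolding u_def by (simp add: matrix_vector_mult_diff_distrib inner_diff_right)
  qed
  define c where "c = u \<bullet> (H *v u)"
  have c0: "c > 0" using pd[OF u0] c_def by simp
  define u' where "u' = (1 / sqrt c) *\<^sub>R u"
  have u'u': "u' \<bullet> (H *v u') = 1"
    using c0 unfolding u'_def c_def
    by (simp add: matrix_vector_mult_scaleR inner_scaleR_right inner_scaleR_left)
  have orth': "s \<bullet> (H *v u') = 0" "u' \<bullet> (H *v s) = 0" if "s \<in> S" for s
    using orth[OF that] sym_form[OF sym, of s u'] unfolding u'_def
    by (simp_all add: matrix_vector_mult_scaleR inner_scaleR_right)
  have notin: "u' \<notin> S" using orth' u'u' by force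
  have "hon H (insert u' S)"
    using S u'u' orth' notin unfolding hon_def by auto
  moreover have "card (insert u' S) = Suc (card S)" using fin notin by simp
  ultimately show ?thesis by blast
qed


lemma hon_full:
  fixes H :: "real^'n^'n"
  assumes sym: "transpose H = H" and pd: "\<And>x. x \<noteq> 0 \<Longrightarrow> x \<bullet> (H *v x) > 0"
  shows "\<exists>S. hon H S \<and> card S = CARD('n)"
proof -
  have "k \<le> CARD('n) \<Longrightarrow> \<exists>S. hon H S \<and> card S = k" for k
  proof (induct k)
    case 0 then show ?case by (intro exI[of _ "{}"]) (simp add: hon_def)
  next
    case (Suc k)
    then obtain S where "hon H S" "card S = k" by auto
    then show ?case using hon_extend[OF sym pd, of S] Suc.prems by auto
  qed
  then show ?thesis by simp
qed

lemma Hspace_sqrt: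
  fixes H :: "real^'n^'n"
  assumes "H \<in> Hspace"
  shows "\<exists>g. det g = 1 \<and> transpose g ** g = H"
proof -
  have sym: "transpose H = H" and pd: "\<And>x. x \<noteq> 0 \<Longrightarrow> x \<bullet> (H *v x) > 0" and dH: "det H = 1"
    using assms by (auto simp: Hspace_def)
  obtain S where S: "hon H S" "card S = CARD('n)" using hon_full[OF sym pd] by blast
  have "finite S" using hon_card[OF S(1)] by simp
  then obtain f where f: "bij_betw f (UNIV::'n set) S"
    using S(2) finite_same_card_bij[of "UNIV::'n set" S] by auto
  define P :: "real^'n^'n" where "P = (\<chi> i j. f j $ i)"
  have "(transpose P ** H ** P) $ i $ j = f i \<bullet> (H *v f j)" for i j
    by (simp add: P_def transpose_def matrix_matrix_mult_def matrix_vector_mult_def inner_vec_def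
        sum_distrib_left sum_distrib_right mult_ac) (rule sum.swap)
  also have "f i \<bullet> (H *v f j) = (if i = j then 1 else 0)" for i j
    using S(1) f unfolding hon_def bij_betw_def inj_on_def by (auto simp: bij_betwE)
  finally have PHP: "transpose P ** H ** P = mat 1" by (simp add: vec_eq_iff mat_def)
  define g0 where "g0 = transpose P ** H"
  have "g0 ** P = mat 1" using PHP by (simp add: g0_def)
  then have Pg: "P ** g0 = mat 1" by (simp add: matrix_left_right_inverse)
  have g0g0: "transpose g0 ** g0 = H"
  proof -
    have "transpose g0 ** g0 = H ** (P ** g0)"
      by (simp add: g0_def matrix_transpose_mul sym matrix_mul_assoc)
    then show ?thesis using Pg by simp
  qed
  have "det g0 * det g0 = 1" using g0g0 dH by (metis det_mul det_transpose)
  then have dg: "det g0 = 1 \<or> det g0 = -1" by (metis mult_cancel_left1 square_eq_1_iff)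
  show ?thesis
  proof (cases "det g0 = 1")
    case True then show ?thesis using g0g0 by blast
  next
    case False
    obtain i0 :: 'n where True by blast
    define d :: "'n \<Rightarrow> real" where "d i = (if i = i0 then -1 else 1)" for i
    define D :: "real^'n^'n" where "D = (\<chi> i j. if i = j then d i else 0)"
    have dd: "d i * d i = 1" for i by (simp add: d_def)
    have "(transpose D ** D) $ i $ j = (\<Sum>k\<in>UNIV. if k = i then (if k = j then d i * d j else 0) else 0)" for i j
      unfolding D_def transpose_def matrix_matrix_mult_def by (simp only: vec_lambda_beta, intro sum.cong) auto
    then have "(transpose D ** D) $ i $ j = (if i = j then 1 else 0)" for i j
      by (simp add: dd)
    then have DD: "transpose D ** D = mat 1" by (simp add: vec_eq_iff mat_def)
    have "det D = (\<Prod>i\<in>UNIV. D $ i $ i)" by (rule det_diagonal) (simp add: D_def)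
    also have "\<dots> = (\<Prod>i\<in>UNIV. if i = i0 then -1 else 1)" by (simp add: D_def d_def)
    also have "\<dots> = -1" by (simp add: prod.If_cases)
    finally have dD: "det D = -1" .
    have "transpose (D ** g0) ** (D ** g0) = transpose g0 ** (transpose D ** D) ** g0"
      by (simp add: matrix_transpose_mul matrix_mul_assoc)
    then have "transpose (D ** g0) ** (D ** g0) = H" using DD g0g0 by simp
    moreover have "det (D ** g0) = 1" using dD dg False by (simp add: det_mul)
    ultimately show ?thesis by blast
  qed
qed



lemma inv_of_det:
  fixes A :: "real^'n^'n"
  assumes "det A \<noteq> 0"
  shows "A ** matrix_inv A = mat 1" "matrix_inv A ** A = mat 1"
proof -
  have "invertible A" using assms invertible_det_nz by blast
  then have "\<exists>A'. A ** A' = mat 1 \<and> A' ** A = mat 1" unfolding invertible_def by blast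
  then have "A ** matrix_inv A = mat 1 \<and> matrix_inv A ** A = mat 1"
    unfolding matrix_inv_def by (rule someI_ex)
  then show "A ** matrix_inv A = mat 1" "matrix_inv A ** A = mat 1" by auto
qed

lemma matrix_inv_eq:
  fixes A B :: "real^'n^'n"
  assumes "A ** B = mat 1"
  shows "matrix_inv A = B"
proof -
  have BA: "B ** A = mat 1" using assms matrix_left_right_inverse by blast
  have "det A * det B = 1" using assms by (metis det_I det_mul)
  then have "det A \<noteq> 0" by auto
  from inv_of_det[OF this] have "matrix_inv A ** A = mat 1" by simp
  then have "matrix_inv A ** (A ** B) = B" by (simp add: matrix_mul_assoc)
  then show ?thesis using assms by simp
qed

lemma bl_mv_left: "bounded_linear (\<lambda>A::real^'n^'m. A *v v)"
proof -
  have "linear (\<lambda>A::real^'n^'m. A *v v)"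
    by (rule linearI) (simp_all add: matrix_vector_mult_add_rdistrib scaleR_matrix_vector_assoc)
  then show ?thesis using linear_conv_bounded_linear by blast
qed

lemma bb_mm: "bounded_bilinear (\<lambda>A B::real^'n^'n. A ** B)"
proof -
  have "bilinear (\<lambda>A B::real^'n^'n. A ** B)"
    by (simp add: bilinear_def linear_iff matrix_add_ldistrib matrix_add_rdistrib matrix_scalar_ac
        scalar_matrix_assoc[symmetric])
  then show ?thesis using bilinear_conv_bounded_bilinear by blast
qed

lemma bl_mm_right: "bounded_linear (\<lambda>A::real^'n^'n. A ** (B::real^'n^'n))"
  using bounded_bilinear.bounded_linear_left[OF bb_mm] by blast

lemma bl_mm_left: "bounded_linear (\<lambda>A::real^'n^'n. (B::real^'n^'n) ** A)"
  using bounded_bilinear.bounded_linear_right[OF bb_mm] by blast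

lemma mexp_cont: "continuous_on UNIV (\<lambda>t. mexp (t *\<^sub>R X))"
  by (rule continuous_on_vector_derivative) (rule has_vector_derivative_at_within[OF mexp_deriv])

lemma inner_MtM: "x \<bullet> ((transpose (A::real^'n^'n) ** A) *v x) = (A *v x) \<bullet> (A *v x)"
proof -
  have "x \<bullet> ((transpose A ** A) *v x) = x \<bullet> (transpose A *v (A *v x))" by (simp add: matrix_vector_mul_assoc)
  also have "\<dots> = x \<bullet> ((A *v x) v* A)" by simp
  also have "\<dots> = (A *v x) \<bullet> (A *v x)" by (simp add: dot_lmul_matrix[symmetric] inner_commute)
  finally show ?thesis .
qed


locale rep =
  fixes \<rho> :: "real^'n^'n \<Rightarrow> real^'m^'m"
  assumes smooth: "smooth_on_subset SLn \<rho>"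
    and hom: "\<And>g h. g \<in> SLn \<Longrightarrow> h \<in> SLn \<Longrightarrow> \<rho> (g ** h) = \<rho> g ** \<rho> h"
    and into_SL: "\<And>g. g \<in> SLn \<Longrightarrow> det (\<rho> g) = 1"
begin

lemma I_SL: "mat 1 \<in> SLn" by (simp add: SLn_def)

lemma rho_one: "\<rho> (mat 1) = mat 1"
proof -
  let ?R = "\<rho> (mat 1)"
  have RR: "?R ** ?R = ?R" using hom[OF I_SL I_SL] by simp
  have "det ?R = 1" using into_SL[OF I_SL] .
  then have "matrix_inv ?R ** ?R = mat 1" using inv_of_det(2)[of ?R] by simp
  then have "matrix_inv ?R ** (?R ** ?R) = mat 1" using RR by simp
  then show ?thesis by (simp add: matrix_mul_assoc \<open>matrix_inv ?R ** ?R = mat 1\<close>)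
qed

lemma exists_L:
  "\<exists>L. linear L \<and> (\<forall>\<xi>. (\<forall>t. mexp (t *\<^sub>R \<xi>) \<in> SLn) \<longrightarrow>
      ((\<lambda>t. \<rho> (mexp (t *\<^sub>R \<xi>))) has_vector_derivative L \<xi>) (at 0))"
proof -
  obtain U f' where U: "mat 1 \<in> U" "smooth_on U f'" "\<And>y. y \<in> U \<inter> SLn \<Longrightarrow> f' y = \<rho> y"
    using smooth I_SL unfolding smooth_on_subset_def by metis
  have oU: "open U" using U(2) unfolding smooth_on_def by blast
  have "iter_dd [] f' differentiable (at (mat 1))" using U(1,2) unfolding smooth_on_def by blast
  then have "f' differentiable (at (mat 1))" by simp
  then have fd: "(f' has_derivative frechet_derivative f' (at (mat 1))) (at (mat 1))"
    using frechet_derivative_works by blast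
  define L where "L = frechet_derivative f' (at (mat 1))"
  have linL: "linear L" using fd has_derivative_linear L_def by blast
  have "((\<lambda>t. \<rho> (mexp (t *\<^sub>R \<xi>))) has_vector_derivative L \<xi>) (at 0)"
    if SL: "\<forall>t. mexp (t *\<^sub>R \<xi>) \<in> SLn" for \<xi>
  proof -
    have d1: "((\<lambda>t. mexp (t *\<^sub>R \<xi>)) has_derivative (\<lambda>h. h *\<^sub>R \<xi>)) (at 0)"
      using mexp_deriv[of \<xi> 0] by (simp add: has_vector_derivative_def)
    have d2: "(f' has_derivative L) (at (mexp (0 *\<^sub>R \<xi>)))" using fd L_def by simp
    have "((f' \<circ> (\<lambda>t. mexp (t *\<^sub>R \<xi>))) has_derivative (L \<circ> (\<lambda>h. h *\<^sub>R \<xi>))) (at 0)"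
      by (rule diff_chain_at[OF d1 d2])
    moreover have "(L \<circ> (\<lambda>h. h *\<^sub>R \<xi>)) = (\<lambda>h. h *\<^sub>R L \<xi>)"
      using linL by (simp add: o_def fun_eq_iff linear_scale)
    ultimately have d3: "((\<lambda>t. f' (mexp (t *\<^sub>R \<xi>))) has_vector_derivative L \<xi>) (at 0)"
      by (simp add: has_vector_derivative_def o_def)
    have oV: "open ((\<lambda>t. mexp (t *\<^sub>R \<xi>)) -` U)"
      using continuous_on_open_vimage[of UNIV "\<lambda>t. mexp (t *\<^sub>R \<xi>)"] mexp_cont oU by auto
    show ?thesis
      by (rule has_vector_derivative_transform_within_open[OF d3 oV]) (use U SL in auto)
  qed
  then show ?thesis using linL by blast
qed


context
  fixes L :: "real^'n^'n \<Rightarrow> real^'m^'m"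
  assumes LP: "\<And>\<xi>. (\<forall>t. mexp (t *\<^sub>R \<xi>) \<in> SLn) \<Longrightarrow>
      ((\<lambda>t. \<rho> (mexp (t *\<^sub>R \<xi>))) has_vector_derivative L \<xi>) (at 0)"
begin

lemma LPv:
  assumes "\<forall>t. mexp (t *\<^sub>R \<xi>) \<in> SLn"
  shows "((\<lambda>t. \<rho> (mexp (t *\<^sub>R \<xi>)) *v v) has_vector_derivative L \<xi> *v v) (at 0)"
  by (rule bounded_linear.has_vector_derivative[OF bl_mv_left LP[OF assms]])

lemma kill:
  assumes SL: "\<forall>t. mexp (t *\<^sub>R \<xi>) \<in> SLn" and fx: "\<And>t. \<rho> (mexp (t *\<^sub>R \<xi>)) *v v = v"
  shows "L \<xi> *v v = 0"
proof -
  have "((\<lambda>t. v) has_vector_derivative L \<xi> *v v) (at 0)" using LPv[OF SL, of v] fx by simp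
  moreover have "((\<lambda>t. v) has_vector_derivative 0) (at 0)" by simp
  ultimately show ?thesis using vector_derivative_unique_at by blast
qed

lemma fixv:
  assumes SL: "\<forall>t. mexp (t *\<^sub>R \<xi>) \<in> SLn" and k: "L \<xi> *v v = 0"
  shows "\<rho> (mexp (t *\<^sub>R \<xi>)) *v v = v"
proof -
  define f where "f s = \<rho> (mexp (s *\<^sub>R \<xi>)) *v v" for s
  define h where "h r = \<rho> (mexp (r *\<^sub>R \<xi>)) *v v" for r
  have hd: "(h has_vector_derivative 0) (at 0)" using LPv[OF SL, of v] k unfolding h_def by simp
  have "(f has_derivative (\<lambda>h. 0)) (at t0 within UNIV)" for t0
  proof -
    have feq: "f = (\<lambda>s. \<rho> (mexp (t0 *\<^sub>R \<xi>)) *v (h \<circ> (\<lambda>s. s - t0)) s)"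
    proof
      fix s
      have "mexp (s *\<^sub>R \<xi>) = mexp (t0 *\<^sub>R \<xi>) ** mexp ((s - t0) *\<^sub>R \<xi>)"
        using mexp_scale_add[of t0 "s - t0" \<xi>] by simp
      then show "f s = \<rho> (mexp (t0 *\<^sub>R \<xi>)) *v (h \<circ> (\<lambda>s. s - t0)) s"
        unfolding f_def h_def using hom SL by (simp add: matrix_vector_mul_assoc)
    qed
    have "((\<lambda>s. s - t0) has_vector_derivative 1) (at t0)"
      by (auto intro!: derivative_eq_intros)
    moreover have "(h has_vector_derivative 0) (at ((\<lambda>s. s - t0) t0))" using hd by simp
    ultimately have "((h \<circ> (\<lambda>s. s - t0)) has_vector_derivative 1 *\<^sub>R 0) (at t0)"
      by (rule vector_diff_chain_at)
    then have "((\<lambda>s. \<rho> (mexp (t0 *\<^sub>R \<xi>)) *v (h \<circ> (\<lambda>s. s - t0)) s) has_vector_derivative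
        \<rho> (mexp (t0 *\<^sub>R \<xi>)) *v (1 *\<^sub>R 0)) (at t0)"
      by (rule bounded_linear.has_vector_derivative[OF matrix_vector_mul_bounded_linear])
    then have "(f has_vector_derivative 0) (at t0)" using feq by simp
    then show ?thesis by (simp add: has_vector_derivative_def)
  qed
  then obtain c where "\<forall>x\<in>UNIV. f x = c" using has_derivative_zero_constant[of UNIV f] by blast
  then have "f t = f 0" by simp
  then show ?thesis unfolding f_def by (simp add: rho_one)
qed

end

end

lemma mexp_SO:
  assumes "transpose K = - K"
  shows "mexp (s *\<^sub>R K) \<in> SOn"
proof -
  have "transpose (mexp (s *\<^sub>R K)) = mexp (- (s *\<^sub>R K))"
    using assms by (simp add: mexp_transpose[symmetric] transpose_scalar)
  then have o: "orthogonal_matrix (mexp (s *\<^sub>R K))"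
    by (simp add: orthogonal_matrix mexp_neg_left)
  have "mexp (s *\<^sub>R K) = mexp ((s/2) *\<^sub>R K) ** mexp ((s/2) *\<^sub>R K)"
    using mexp_scale_add[of "s/2" "s/2" K] by simp
  then have "det (mexp (s *\<^sub>R K)) = det (mexp ((s/2) *\<^sub>R K)) * det (mexp ((s/2) *\<^sub>R K))"
    by (metis det_mul)
  then have "det (mexp (s *\<^sub>R K)) \<ge> 0" by simp
  then have "det (mexp (s *\<^sub>R K)) = 1" using det_orthogonal_matrix[OF o] by auto
  then show ?thesis using o by (simp add: SOn_def)
qed

lemma SO_SL: "k \<in> SOn \<Longrightarrow> k \<in> SLn" by (simp add: SOn_def SLn_def)


lemma transpose_diff: "transpose (A - B) = transpose A - (transpose B :: real^'n^'m)"
  by (simp add: transpose_def vec_eq_iff)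

lemma Ffun_eval:
  fixes \<rho> :: "real^'n^'n \<Rightarrow> real^'m^'m"
  assumes hom: "\<And>g h. g \<in> SLn \<Longrightarrow> h \<in> SLn \<Longrightarrow> \<rho> (g ** h) = \<rho> g ** \<rho> h"
    and inv_norm: "\<And>k v. k \<in> SOn \<Longrightarrow> norm (\<rho> k *v v) = norm v"
    and m: "m \<in> SLn"
  shows "Ffun \<rho> w (transpose m ** m) = (norm (\<rho> m *v w))\<^sup>2"
proof -
  define h where "h = (SOME g. g \<in> SLn \<and> transpose g ** g = transpose m ** m)"
  have "h \<in> SLn \<and> transpose h ** h = transpose m ** m"
    unfolding h_def by (rule someI[of _ m]) (use m in simp)
  then have hS: "h \<in> SLn" and hh: "transpose h ** h = transpose m ** m" by auto
  define mi where "mi = matrix_inv m"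
  have dm: "det m = 1" using m by (simp add: SLn_def)
  have mmi: "m ** mi = mat 1" "mi ** m = mat 1" using inv_of_det[of m] dm mi_def by auto
  have dmi: "det mi = 1" using mmi(1) dm by (metis det_I det_mul mult_1)
  define q where "q = h ** mi"
  have "transpose q ** q = transpose mi ** (transpose h ** h) ** mi"
    by (simp add: q_def matrix_transpose_mul matrix_mul_assoc)
  also have "\<dots> = transpose (m ** mi) ** (m ** mi)"
    by (simp add: hh matrix_transpose_mul matrix_mul_assoc)
  finally have "transpose q ** q = mat 1" using mmi by simp
  moreover have "det q = 1" using hS dmi by (simp add: q_def det_mul SLn_def)
  ultimately have oS: "q \<in> SOn" by (simp add: SOn_def orthogonal_matrix)
  have "h = q ** m" by (simp add: q_def matrix_mul_assoc[symmetric] mmi)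
  then have "\<rho> h = \<rho> q ** \<rho> m" using hom oS m by (simp add: SO_SL)
  then have "norm (\<rho> h *v w) = norm (\<rho> m *v w)"
    using inv_norm[OF oS] by (simp add: matrix_vector_mul_assoc[symmetric])
  then show ?thesis by (simp add: Ffun_def h_def[symmetric])
qed


theorem lemma1:
  fixes \<rho> :: "real^'n^'n \<Rightarrow> real^'m^'m" and w :: "real^'m" and H :: "real^'n^'n"
  assumes smooth: "smooth_on_subset SLn \<rho>"
    and hom: "\<And>g h. g \<in> SLn \<Longrightarrow> h \<in> SLn \<Longrightarrow> \<rho> (g ** h) = \<rho> g ** \<rho> h"
    and into_SL: "\<And>g. g \<in> SLn \<Longrightarrow> det (\<rho> g) = 1"
    and inv_norm: "\<And>k v. k \<in> SOn \<Longrightarrow> norm (\<rho> k *v v) = norm v"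
    and transp: "\<And>\<xi>. \<xi> \<in> sln \<Longrightarrow> drho \<rho> (transpose \<xi>) = transpose (drho \<rho> \<xi>)"
    and crit: "critical_point_H (Ffun \<rho> w) H"
  shows "\<forall>A \<in> lie_alg (stab \<rho> w). matrix_inv H ** transpose A ** H \<in> lie_alg (stab \<rho> w)"
proof
  fix A assume A: "A \<in> lie_alg (stab \<rho> w)"
  interpret rep \<rho> using smooth hom into_SL by unfold_locales
  obtain L where linL: "linear L" and LP: "\<And>\<xi>. (\<forall>t. mexp (t *\<^sub>R \<xi>) \<in> SLn) \<Longrightarrow>
      ((\<lambda>t. \<rho> (mexp (t *\<^sub>R \<xi>))) has_vector_derivative L \<xi>) (at 0)"
    using exists_L by blast
  have HH: "H \<in> Hspace" using crit critical_point_H_def by blast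
  obtain g where dg: "det g = 1" and gH: "transpose g ** g = H" using Hspace_sqrt[OF HH] by blast
  define gi where "gi = matrix_inv g"
  have ggi: "g ** gi = mat 1" "gi ** g = mat 1" using inv_of_det[of g] dg gi_def by auto
  have dgi: "det gi = 1" using ggi(1) dg by (metis det_I det_mul mult_1)
  have gSL: "g \<in> SLn" "gi \<in> SLn" using dg dgi SLn_def by auto
  have Astab: "mexp (t *\<^sub>R A) \<in> SLn" "\<rho> (mexp (t *\<^sub>R A)) *v w = w" for t
    using A by (simp_all add: lie_alg_def stab_def)
  define C where "C = g ** A ** gi"
  have expC: "mexp (t *\<^sub>R C) = g ** mexp (t *\<^sub>R A) ** gi" for t
  proof -
    have "t *\<^sub>R C = g ** (t *\<^sub>R A) ** gi"
      by (simp add: C_def scalar_matrix_assoc matrix_scalar_ac)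
    then show ?thesis using mexp_conj[OF ggi] by simp
  qed
  have CSL: "\<forall>t. mexp (t *\<^sub>R C) \<in> SLn"
    using expC Astab(1) dg dgi by (simp add: SLn_def det_mul)
  have CtSL: "\<forall>t. mexp (t *\<^sub>R transpose C) \<in> SLn"
    using CSL by (simp add: mexp_transpose transpose_scalar[symmetric] SLn_def)
  define v where "v = \<rho> g *v w"
  have Cfix: "\<rho> (mexp (t *\<^sub>R C)) *v v = v" for t
  proof -
    have "mexp (t *\<^sub>R C) ** g = g ** mexp (t *\<^sub>R A)"
      using expC ggi by (simp add: matrix_mul_assoc[symmetric])
    then have "\<rho> (mexp (t *\<^sub>R C)) ** \<rho> g = \<rho> g ** \<rho> (mexp (t *\<^sub>R A))"
      using hom CSL gSL Astab(1) by metis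
    then show ?thesis unfolding v_def using Astab(2) by (metis matrix_vector_mul_assoc)
  qed
  define P where "P = L C"
  have Pv: "P *v v = 0" unfolding P_def by (rule kill[OF LP CSL Cfix])
  have trC: "trace C = 0" by (rule trace_zero_of_det) (use CSL in \<open>simp add: SLn_def\<close>)
  have drC: "drho \<rho> C = P" unfolding drho_def P_def using LP[OF CSL] vector_derivative_at by blast
  have drCt: "drho \<rho> (transpose C) = L (transpose C)" unfolding drho_def using LP[OF CtSL] vector_derivative_at by blast
  have Ct: "L (transpose C) = transpose P" using transp[of C] trC drC drCt by (simp add: sln_def)
  have mom: "(\<rho> k *v v) \<bullet> (P *v (\<rho> k *v v)) = 0" if k: "k \<in> SOn" for k
  proof -
    define u where "u = \<rho> k *v v"
    have kSL: "k \<in> SLn" using k SO_SL by blast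
    have kk: "transpose k ** k = mat 1" using k by (simp add: SOn_def orthogonal_matrix)
    define kg where "kg = k ** g"
    have kgSL: "kg \<in> SLn" using dg k by (simp add: kg_def SLn_def SOn_def det_mul)
    define m where "m t = mexp (t *\<^sub>R C) ** kg" for t
    have mSL: "m t \<in> SLn" for t using CSL kgSL by (simp add: m_def SLn_def det_mul)
    define \<gamma> where "\<gamma> t = transpose (m t) ** m t" for t
    have \<gamma>H: "\<gamma> t \<in> Hspace" for t
    proof -
      have dm: "det (m t) = 1" using mSL by (simp add: SLn_def)
      have sym: "transpose (\<gamma> t) = \<gamma> t" by (simp add: \<gamma>_def matrix_transpose_mul)
      have pd: "x \<bullet> (\<gamma> t *v x) > 0" if x0: "x \<noteq> 0" for x
      proof -
        have "m t *v x \<noteq> 0"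
        proof
          assume "m t *v x = 0"
          then have "matrix_inv (m t) *v (m t *v x) = 0" by simp
          then show False using inv_of_det(2)[of "m t"] dm x0 by (simp add: matrix_vector_mul_assoc)
        qed
        then show ?thesis unfolding \<gamma>_def inner_MtM by simp
      qed
      have "det (\<gamma> t) = 1" using dm by (simp add: \<gamma>_def det_mul)
      then show ?thesis using sym pd by (simp add: Hspace_def)
    qed
    have \<gamma>0: "\<gamma> 0 = H"
    proof -
      have "\<gamma> 0 = transpose g ** (transpose k ** k) ** g"
        by (simp add: \<gamma>_def m_def kg_def matrix_transpose_mul matrix_mul_assoc)
      then show ?thesis using kk gH by simp
    qed
    have md: "(m has_vector_derivative (mexp (t *\<^sub>R C) ** C) ** kg) (at t)" for t
      unfolding m_def by (rule bounded_linear.has_vector_derivative[OF bl_mm_right mexp_deriv])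
    have \<gamma>d: "\<gamma> differentiable (at 0)"
    proof -
      have "((\<lambda>t. transpose (m t)) has_vector_derivative transpose ((mexp (0 *\<^sub>R C) ** C) ** kg)) (at 0)"
        by (rule bounded_linear.has_vector_derivative[OF bl_transpose md])
      then have "(\<gamma> has_vector_derivative (transpose (m 0) ** ((mexp (0 *\<^sub>R C) ** C) ** kg) +
          transpose ((mexp (0 *\<^sub>R C) ** C) ** kg) ** m 0)) (at 0)"
        unfolding \<gamma>_def by (rule bounded_bilinear.has_vector_derivative[OF bb_mm _ md])
      then show ?thesis by (rule differentiableI_vector)
    qed
    have Fd: "((\<lambda>t. Ffun \<rho> w (\<gamma> t)) has_real_derivative 0) (at 0)"
      using crit \<gamma>H \<gamma>0 \<gamma>d unfolding critical_point_H_def by blast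
    define f where "f t = \<rho> (mexp (t *\<^sub>R C)) *v u" for t
    have Feq: "Ffun \<rho> w (\<gamma> t) = (norm (f t))\<^sup>2" for t
    proof -
      have "Ffun \<rho> w (\<gamma> t) = (norm (\<rho> (m t) *v w))\<^sup>2" unfolding \<gamma>_def by (rule Ffun_eval[OF hom inv_norm mSL])
      also have "\<rho> (m t) = \<rho> (mexp (t *\<^sub>R C)) ** (\<rho> k ** \<rho> g)"
        using hom CSL kgSL kSL gSL by (simp add: m_def kg_def)
      finally show ?thesis by (simp add: f_def u_def v_def matrix_vector_mul_assoc)
    qed
    have fd: "(f has_vector_derivative P *v u) (at 0)" unfolding f_def P_def by (rule LPv[OF LP CSL])
    have f0: "f 0 = u" by (simp add: f_def rho_one)
    have "((\<lambda>t. f t \<bullet> f t) has_vector_derivative (f 0 \<bullet> (P *v u) + (P *v u) \<bullet> f 0)) (at 0)"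
      by (rule bounded_bilinear.has_vector_derivative[OF bounded_bilinear_inner fd fd])
    moreover have "f 0 \<bullet> (P *v u) + (P *v u) \<bullet> f 0 = 2 * (u \<bullet> (P *v u))"
      using f0 inner_commute[of "P *v u" u] by simp
    moreover have "(\<lambda>t. f t \<bullet> f t) = (\<lambda>t. (norm (f t))\<^sup>2)" by (simp add: power2_norm_eq_inner)
    ultimately have "((\<lambda>t. (norm (f t))\<^sup>2) has_real_derivative 2 * (u \<bullet> (P *v u))) (at 0)"
      by (simp only: has_real_derivative_iff_has_vector_derivative)
    moreover have "(\<lambda>t. (norm (f t))\<^sup>2) = (\<lambda>t. Ffun \<rho> w (\<gamma> t))" using Feq by auto
    ultimately have "2 * (u \<bullet> (P *v u)) = 0" using Fd DERIV_unique by metis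
    then show ?thesis by (simp add: u_def)
  qed
  define K where "K = (1/2) *\<^sub>R (C - transpose C)"
  have Kt: "transpose K = - K" by (simp add: K_def transpose_scalar transpose_diff scaleR_diff_right)
  have KSO: "mexp (s *\<^sub>R K) \<in> SOn" for s using mexp_SO[OF Kt] .
  have KSL: "\<forall>s. mexp (s *\<^sub>R K) \<in> SLn" using KSO SO_SL by blast
  have LK: "L K = (1/2) *\<^sub>R (P - transpose P)"
    using linL Ct by (simp add: K_def P_def linear_cmul linear_diff)
  define uu where "uu s = \<rho> (mexp (s *\<^sub>R K)) *v v" for s
  have ud: "(uu has_vector_derivative L K *v v) (at 0)" unfolding uu_def by (rule LPv[OF LP KSL])
  have uu0: "uu 0 = v" by (simp add: uu_def rho_one)
  have Pud: "((\<lambda>s. P *v uu s) has_vector_derivative P *v (L K *v v)) (at 0)"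
    by (rule bounded_linear.has_vector_derivative[OF matrix_vector_mul_bounded_linear ud])
  have "((\<lambda>s. uu s \<bullet> (P *v uu s)) has_vector_derivative
      (uu 0 \<bullet> (P *v (L K *v v)) + (L K *v v) \<bullet> (P *v uu 0))) (at 0)"
    by (rule bounded_bilinear.has_vector_derivative[OF bounded_bilinear_inner ud Pud])
  moreover have "(\<lambda>s. uu s \<bullet> (P *v uu s)) = (\<lambda>s. 0)"
    using mom[OF KSO] by (simp add: uu_def fun_eq_iff)
  ultimately have "((\<lambda>s. 0::real) has_vector_derivative v \<bullet> (P *v (L K *v v))) (at 0)"
    using uu0 Pv by simp
  then have z: "v \<bullet> (P *v (L K *v v)) = 0"
    using vector_derivative_unique_at has_vector_derivative_const by metis
  have e1: "v \<bullet> (P *v y) = (transpose P *v v) \<bullet> y" for y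
    by (simp add: dot_lmul_matrix[symmetric])
  have y: "L K *v v = (- 1/2) *\<^sub>R (transpose P *v v)"
    using Pv by (simp add: LK matrix_vector_mult_diff_rdistrib scaleR_matrix_vector_assoc[symmetric])
  have "(transpose P *v v) \<bullet> ((- 1/2) *\<^sub>R (transpose P *v v)) = 0"
    using z e1[of "L K *v v"] y by simp
  then have "(transpose P *v v) \<bullet> (transpose P *v v) = 0" by (simp add: inner_scaleR_right)
  then have Ctv: "L (transpose C) *v v = 0" using Ct by simp
  have Ctfix: "\<rho> (mexp (t *\<^sub>R transpose C)) *v v = v" for t
    by (rule fixv[OF LP CtSL Ctv])
  have Hinv: "matrix_inv H = gi ** transpose gi"
  proof (rule matrix_inv_eq)
    have "H ** (gi ** transpose gi) = transpose g ** (g ** gi) ** transpose gi"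
      by (simp add: gH[symmetric] matrix_mul_assoc)
    also have "\<dots> = transpose (gi ** g)" by (simp only: ggi(1) matrix_mul_rid matrix_transpose_mul)
    also have "\<dots> = mat 1" by (simp add: ggi)
    finally show "H ** (gi ** transpose gi) = mat 1" .
  qed
  define B where "B = matrix_inv H ** transpose A ** H"
  have B: "B = gi ** transpose C ** g"
  proof -
    have "B = gi ** transpose gi ** transpose A ** (transpose g ** g)" by (simp add: B_def Hinv gH)
    then show ?thesis by (simp add: C_def matrix_transpose_mul matrix_mul_assoc)
  qed
  have expB: "mexp (t *\<^sub>R B) = gi ** mexp (t *\<^sub>R transpose C) ** g" for t
  proof -
    have "t *\<^sub>R B = gi ** (t *\<^sub>R transpose C) ** g"
      by (simp add: B scalar_matrix_assoc matrix_scalar_ac)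
    then show ?thesis using mexp_conj[OF ggi(2) ggi(1)] by simp
  qed
  have BSL: "mexp (t *\<^sub>R B) \<in> SLn" for t
    using expB CtSL dg dgi by (simp add: SLn_def det_mul)
  have "\<rho> (mexp (t *\<^sub>R B)) *v w = w" for t
  proof -
    have "\<rho> (mexp (t *\<^sub>R B)) = \<rho> gi ** \<rho> (mexp (t *\<^sub>R transpose C)) ** \<rho> g"
    proof -
      have E: "mexp (t *\<^sub>R transpose C) \<in> SLn" using CtSL by blast
      then have "gi ** mexp (t *\<^sub>R transpose C) \<in> SLn" using dgi by (simp add: SLn_def det_mul)
      then have "\<rho> (gi ** mexp (t *\<^sub>R transpose C) ** g) = \<rho> (gi ** mexp (t *\<^sub>R transpose C)) ** \<rho> g"
        using hom gSL by blast
      also have "\<rho> (gi ** mexp (t *\<^sub>R transpose C)) = \<rho> gi ** \<rho> (mexp (t *\<^sub>R transpose C))"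
        using hom gSL E by blast
      finally show ?thesis using expB by simp
    qed
    then have "\<rho> (mexp (t *\<^sub>R B)) *v w = \<rho> gi *v v"
      using Ctfix by (simp add: v_def matrix_vector_mul_assoc[symmetric])
    also have "\<dots> = \<rho> (gi ** g) *v w" using hom gSL by (simp add: v_def matrix_vector_mul_assoc)
    finally show ?thesis using ggi rho_one by simp
  qed
  then show "matrix_inv H ** transpose A ** H \<in> lie_alg (stab \<rho> w)"
    using BSL by (simp add: lie_alg_def stab_def B_def)
qed


end
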